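(* Let $M(C,\bar\xi,\pi)$ be a Myller configuration with Darboux frame $(\bar\xi,\bar\mu,\bar v)$ and invariants $G,K,T$ such that $(G(s),K(s))\neq(0,0)$ for all $s$, and let $\bar W_n$ be its unit ND-vector field. Then $C$ is a $W_n$-helix in $M$ if and only if $C$ is a $\bar\xi$-helix in $M$.
   Context: Let $C$ be a smooth curve in $E^3$ parametrized by arclength $s$; primes denote $d/ds$. A Myller configuration $M(C,\bar\xi,\pi)$ consists of a smooth unit vector field $\bar\xi(s)$ along $C$ and a smooth field of oriented planes $\pi(s)$ with $\bar\xi(s)\in\pi(s)$. Let $\bar v$ be the unit normal of $\pi$ and $\bar\mu=\bar v\times\bar\xi$. The Darboux frame satisfies $\bar\xi'=G\bar\mu+K\bar v$, $\bar\mu'=-G\bar\xi+T\bar v$, $\bar v'=-K\bar\xi-T\bar\mu$. The normal-type Darboux vector (ND-vector) is $W_n=-K\bar\mu+G\bar v$ and $\bar W_n=W_n/\|W_n\|$. $C$ is a $W_n$-helix in $M$ if $\bar W_n$ makes a constant angle with a fixed unit direction $\bar l_n$ (i.e. $\langle\bar W_n,\bar l_n\rangle$ is constant, $\bar l_n$ a constant unit vector). $C$ is a $\bar\xi$-helix in $M$ if $\langle\bar\xi,\bar d_\xi\rangle$ is constant for some constant unit vector $\bar d_\xi$. *)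

theory Defs
  imports "HOL-Analysis.Analysis"
begin

definition smooth_on :: "real set \<Rightarrow> (real \<Rightarrow> 'a::real_normed_vector) \<Rightarrow> bool" where
  "smooth_on I f \<longleftrightarrow> (\<exists>D. D 0 = f \<and> (\<forall>n. \<forall>s\<in>I. (D n has_vector_derivative D (Suc n) s) (at s)))"

definition ND_vector :: "(real \<Rightarrow> real) \<Rightarrow> (real \<Rightarrow> real) \<Rightarrow> (real \<Rightarrow> real^3) \<Rightarrow> (real \<Rightarrow> real^3) \<Rightarrow> real \<Rightarrow> real^3" where
  "ND_vector G K mu v s = (- K s) *\<^sub>R mu s + G s *\<^sub>R v s"

definition unit_ND_vector :: "(real \<Rightarrow> real) \<Rightarrow> (real \<Rightarrow> real) \<Rightarrow> (real \<Rightarrow> real^3) \<Rightarrow> (real \<Rightarrow> real^3) \<Rightarrow> real \<Rightarrow> real^3" where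
  "unit_ND_vector G K mu v s = (1 / norm (ND_vector G K mu v s)) *\<^sub>R ND_vector G K mu v s"

definition const_angle_field :: "real set \<Rightarrow> (real \<Rightarrow> real^3) \<Rightarrow> bool" where
  "const_angle_field I X \<longleftrightarrow> (\<exists>l c. norm l = 1 \<and> (\<forall>s\<in>I. X s \<bullet> l = c))"

definition Wn_helix :: "real set \<Rightarrow> (real \<Rightarrow> real) \<Rightarrow> (real \<Rightarrow> real) \<Rightarrow> (real \<Rightarrow> real^3) \<Rightarrow> (real \<Rightarrow> real^3) \<Rightarrow> bool" where
  "Wn_helix I G K mu v \<longleftrightarrow> const_angle_field I (unit_ND_vector G K mu v)"

definition xi_helix :: "real set \<Rightarrow> (real \<Rightarrow> real^3) \<Rightarrow> bool" where
  "xi_helix I xi \<longleftrightarrow> const_angle_field I xi"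

end

theory Submission
  imports Defs
begin

lemma cross_cross_expand: "cross3 (x::real^3) (cross3 y z) = (x \<bullet> z) *\<^sub>R y - (x \<bullet> y) *\<^sub>R z"
  by (simp add: cross3_simps) (simp add: forall_3)

lemma triple_expand:
  fixes x y w z :: "real^3"
  shows "(x \<bullet> cross3 y w) *\<^sub>R z = (z \<bullet> cross3 y w) *\<^sub>R x + (z \<bullet> cross3 w x) *\<^sub>R y + (z \<bullet> cross3 x y) *\<^sub>R w"
  by (simp add: cross3_simps forall_3)

lemma lagrange3:
  fixes a b c d :: "real^3"
  shows "cross3 a b \<bullet> cross3 c d = (a \<bullet> c) * (b \<bullet> d) - (a \<bullet> d) * (b \<bullet> c)"
  by (simp add: cross3_simps)

lemma triple_swap:
  fixes a b c :: "real^3"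
  shows "cross3 a c \<bullet> b = - (cross3 a b \<bullet> c)"
  by (simp add: cross3_simps)

lemma has_vector_derivative_cross:
  assumes "(f has_vector_derivative f') (at s)" "(g has_vector_derivative g') (at s)"
  shows "((\<lambda>s. cross3 (f s) (g s)) has_vector_derivative (cross3 (f s) g' + cross3 f' (g s))) (at s)"
  using bounded_bilinear.has_vector_derivative[OF bilinear_conv_bounded_bilinear[THEN iffD1, OF bilinear_cross] assms] .

lemma has_real_derivative_inner:
  fixes f g :: "real \<Rightarrow> real^3"
  assumes "(f has_vector_derivative f') (at s)" "(g has_vector_derivative g') (at s)"
  shows "((\<lambda>s. f s \<bullet> g s) has_real_derivative (f s \<bullet> g' + f' \<bullet> g s)) (at s)"
  using bounded_bilinear.has_vector_derivative[OF bounded_bilinear_inner assms]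
  by (simp add: has_real_derivative_iff_has_vector_derivative)

lemma local_const_deriv:
  fixes f :: "real \<Rightarrow> real"
  assumes "open A" "s \<in> A" "\<And>t. t \<in> A \<Longrightarrow> f t = 0" "(f has_real_derivative l) (at s)"
  shows "l = 0"
proof -
  obtain d where d: "d > 0" "ball s d \<subseteq> A" using assms(1,2) open_contains_ball by blast
  show ?thesis
  proof (rule DERIV_local_const[OF assms(4) d(1)], intro allI impI)
    fix y assume "\<bar>s - y\<bar> < d"
    then have "y \<in> A" using d(2) by (auto simp: dist_real_def)
    then show "f s = f y" using assms(2,3) by simp
  qed
qed

lemma decomp:
  fixes a b z :: "real^3"
  assumes "a \<bullet> a = 1" "a \<bullet> b = 0"
  shows "(b \<bullet> b) *\<^sub>R z = ((b \<bullet> b) * (z \<bullet> a)) *\<^sub>R a + (z \<bullet> b) *\<^sub>R b + (z \<bullet> cross3 a b) *\<^sub>R cross3 a b"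
proof -
  have e: "(a \<bullet> cross3 b (cross3 a b)) *\<^sub>R z = (z \<bullet> cross3 b (cross3 a b)) *\<^sub>R a + (z \<bullet> cross3 (cross3 a b) a) *\<^sub>R b + (z \<bullet> cross3 a b) *\<^sub>R cross3 a b"
    by (rule triple_expand)
  have 1: "cross3 b (cross3 a b) = (b \<bullet> b) *\<^sub>R a" using assms by (simp add: cross_cross_expand inner_commute)
  have 2: "cross3 (cross3 a b) a = b" using assms cross_skew[of "cross3 a b" a] by (simp add: cross_cross_expand)
  show ?thesis using e by (simp add: 1 2 assms inner_commute)
qed

lemma decomp_dot:
  fixes a b z y :: "real^3"
  assumes "a \<bullet> a = 1" "a \<bullet> b = 0"
  shows "(b \<bullet> b) * (z \<bullet> y) = (b \<bullet> b) * (z \<bullet> a) * (a \<bullet> y) + (z \<bullet> b) * (b \<bullet> y) + (z \<bullet> cross3 a b) * (cross3 a b \<bullet> y)"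
proof -
  have "((b \<bullet> b) *\<^sub>R z) \<bullet> y = (((b \<bullet> b) * (z \<bullet> a)) *\<^sub>R a + (z \<bullet> b) *\<^sub>R b + (z \<bullet> cross3 a b) *\<^sub>R cross3 a b) \<bullet> y"
    using decomp[OF assms, of z] by simp
  then show ?thesis by (simp add: inner_add_left)
qed

lemma inv_sqrt_deriv:
  assumes "(f has_real_derivative f') (at s)" "f s > 0"
  shows "((\<lambda>s. 1 / sqrt (f s)) has_real_derivative (- f' / (2 * f s * sqrt (f s)))) (at s)"
proof -
  have "((\<lambda>s. 1 / sqrt (f s)) has_real_derivative (- (inverse (sqrt (f s)) / 2 * f') / (sqrt (f s))\<^sup>2)) (at s)"
    using assms by (auto intro!: derivative_eq_intros DERIV_real_sqrt[THEN DERIV_chain2])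
  moreover have "- (inverse (sqrt (f s)) / 2 * f') / (sqrt (f s))\<^sup>2 = - f' / (2 * f s * sqrt (f s))"
    using assms(2) by (simp add: field_simps)
  ultimately show ?thesis by simp
qed

lemma sq_const_imp_const:
  fixes h :: "real \<Rightarrow> real"
  assumes "connected I" "continuous_on I h" "\<And>s. s \<in> I \<Longrightarrow> (h s)\<^sup>2 = a"
  shows "\<exists>c. \<forall>s\<in>I. h s = c"
proof (cases "I = {}")
  case True then show ?thesis by auto
next
  case False
  then obtain s0 where s0: "s0 \<in> I" by auto
  have conn: "connected (h ` I)" using connected_continuous_image assms(1,2) by blast
  have "h s = h s0" if s: "s \<in> I" for s
  proof (rule ccontr)
    assume ne: "h s \<noteq> h s0"
    have sq: "(h s)\<^sup>2 = (h s0)\<^sup>2" using assms(3) s s0 by simp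
    then have neg: "h s = - h s0" using ne by (metis power2_eq_iff)
    then have nz: "h s0 \<noteq> 0" using ne by auto
    have "0 \<in> h ` I"
    proof (cases "h s0 < 0")
      case True
      then show ?thesis using conn[unfolded connected_iff_interval] s s0 neg
        by (metis image_eqI less_eq_real_def neg_0_le_iff_le)
    next
      case False
      then show ?thesis using conn[unfolded connected_iff_interval] s s0 neg nz
        by (metis image_eqI linorder_not_le neg_0_le_iff_le order_le_less)
    qed
    then obtain t where "t \<in> I" "h t = 0" by auto
    then have "a = 0" using assms(3) by force
    then show False using assms(3)[OF s0] nz by simp
  qed
  then show ?thesis by blast
qed


theorem theorem13:
  fixes I :: "real set"
    and r xi mu v :: "real \<Rightarrow> real^3"
    and G K T :: "real \<Rightarrow> real"
  assumes I: "is_interval I" "open I" "I \<noteq> {}"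
    and r_smooth: "smooth_on I r"
    and arclength: "\<And>s. s \<in> I \<Longrightarrow> norm (vector_derivative r (at s)) = 1"
    and xi_smooth: "smooth_on I xi"
    and v_smooth: "smooth_on I v"
    and xi_unit: "\<And>s. s \<in> I \<Longrightarrow> norm (xi s) = 1"
    and v_unit: "\<And>s. s \<in> I \<Longrightarrow> norm (v s) = 1"
    and xi_in_plane: "\<And>s. s \<in> I \<Longrightarrow> xi s \<bullet> v s = 0"
    and mu_def: "\<And>s. s \<in> I \<Longrightarrow> mu s = cross3 (v s) (xi s)"
    and d_xi: "\<And>s. s \<in> I \<Longrightarrow> (xi has_vector_derivative (G s *\<^sub>R mu s + K s *\<^sub>R v s)) (at s)"
    and d_mu: "\<And>s. s \<in> I \<Longrightarrow> (mu has_vector_derivative (- G s *\<^sub>R xi s + T s *\<^sub>R v s)) (at s)"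
    and d_v: "\<And>s. s \<in> I \<Longrightarrow> (v has_vector_derivative (- K s *\<^sub>R xi s - T s *\<^sub>R mu s)) (at s)"
    and GK_nonzero: "\<And>s. s \<in> I \<Longrightarrow> (G s, K s) \<noteq> (0, 0)"
  shows "Wn_helix I G K mu v \<longleftrightarrow> xi_helix I xi"
proof -
  obtain D where D0: "D 0 = xi" and Dd: "\<And>n s. s \<in> I \<Longrightarrow> (D n has_vector_derivative D (Suc n) s) (at s)"
    using xi_smooth unfolding smooth_on_def by blast
  define x1 where "x1 = D 1"
  define x2 where "x2 = D 2"
  have dx: "\<And>s. s \<in> I \<Longrightarrow> (xi has_vector_derivative x1 s) (at s)"
    using Dd[of _ 0] D0 by (simp add: x1_def)
  have dx1: "\<And>s. s \<in> I \<Longrightarrow> (x1 has_vector_derivative x2 s) (at s)"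
    using Dd[of _ 1] by (simp add: x1_def x2_def numeral_2_eq_2)
  have dx2: "\<And>s. s \<in> I \<Longrightarrow> (x2 has_vector_derivative D 3 s) (at s)"
    using Dd[of _ 2] by (simp add: x2_def numeral_3_eq_3 numeral_2_eq_2)
  have cxi: "continuous_on I xi"
    using dx by (meson continuous_at_imp_continuous_on has_vector_derivative_continuous)
  have cx1: "continuous_on I x1"
    using dx1 by (meson continuous_at_imp_continuous_on has_vector_derivative_continuous)
  have cx2: "continuous_on I x2"
    using dx2 by (meson continuous_at_imp_continuous_on has_vector_derivative_continuous)
  have x1_eq: "\<And>s. s \<in> I \<Longrightarrow> x1 s = G s *\<^sub>R mu s + K s *\<^sub>R v s"
    using dx d_xi vector_derivative_unique_at by blast
  have a1: "\<And>s. s \<in> I \<Longrightarrow> xi s \<bullet> xi s = 1"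
    using xi_unit by (simp add: dot_square_norm)
  have vv: "\<And>s. s \<in> I \<Longrightarrow> v s \<bullet> v s = 1"
    using v_unit by (simp add: dot_square_norm)
  have mumu: "\<And>s. s \<in> I \<Longrightarrow> mu s \<bullet> mu s = 1"
    using lagrange3 mu_def a1 vv xi_in_plane by (simp add: inner_commute)
  have muv: "\<And>s. s \<in> I \<Longrightarrow> mu s \<bullet> v s = 0"
    using mu_def by (simp add: dot_cross_self)
  have muxi: "\<And>s. s \<in> I \<Longrightarrow> xi s \<bullet> mu s = 0"
    using mu_def by (simp add: dot_cross_self)
  have a2: "\<And>s. s \<in> I \<Longrightarrow> xi s \<bullet> x1 s = 0"
    using x1_eq muxi xi_in_plane by (simp add: inner_add_right)
  have a3: "\<And>s. s \<in> I \<Longrightarrow> ND_vector G K mu v s = cross3 (xi s) (x1 s)"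
  proof -
    fix s assume s: "s \<in> I"
    have "cross3 (xi s) (mu s) = v s"
      using s mu_def a1 xi_in_plane by (simp add: cross_cross_expand inner_commute)
    moreover have "cross3 (xi s) (v s) = - mu s"
      using s mu_def cross_skew by metis
    ultimately show "ND_vector G K mu v s = cross3 (xi s) (x1 s)"
      using s by (simp add: x1_eq ND_vector_def cross_add_right cross_mult_right)
  qed
  define k2 where "k2 s = x1 s \<bullet> x1 s" for s
  have k2_eq: "\<And>s. s \<in> I \<Longrightarrow> k2 s = (G s)\<^sup>2 + (K s)\<^sup>2"
    using x1_eq mumu vv muv by (simp add: k2_def inner_add_left inner_add_right inner_commute power2_eq_square)
  have k2_pos: "\<And>s. s \<in> I \<Longrightarrow> k2 s > 0"
  proof -
    fix s assume s: "s \<in> I"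
    have "G s \<noteq> 0 \<or> K s \<noteq> 0" using GK_nonzero[OF s] by auto
    then show "k2 s > 0" using k2_eq[OF s] by (auto simp: add_pos_nonneg add_nonneg_pos)
  qed
  have a5: "\<And>s. s \<in> I \<Longrightarrow> k2 s + xi s \<bullet> x2 s = 0"
  proof -
    fix s assume s: "s \<in> I"
    have "((\<lambda>s. xi s \<bullet> x1 s) has_real_derivative (xi s \<bullet> x2 s + x1 s \<bullet> x1 s)) (at s)"
      by (rule has_real_derivative_inner[OF dx[OF s] dx1[OF s]])
    then have "xi s \<bullet> x2 s + x1 s \<bullet> x1 s = 0"
      using local_const_deriv[OF I(2) s, of "\<lambda>s. xi s \<bullet> x1 s"] a2 by blast
    then show "k2 s + xi s \<bullet> x2 s = 0" by (simp add: k2_def)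
  qed
  define W where "W s = cross3 (xi s) (x1 s)" for s
  have WW: "\<And>s. s \<in> I \<Longrightarrow> W s \<bullet> W s = k2 s"
    using a1 a2 by (simp add: W_def lagrange3 k2_def inner_commute)
  have normW: "\<And>s. s \<in> I \<Longrightarrow> norm (W s) = sqrt (k2 s)"
    using WW by (simp add: norm_eq_sqrt_inner)
  define Wb where "Wb s = (1 / sqrt (k2 s)) *\<^sub>R W s" for s
  have Wb_eq: "\<And>s. s \<in> I \<Longrightarrow> unit_ND_vector G K mu v s = Wb s"
    using normW by (simp add: unit_ND_vector_def a3 Wb_def W_def)

  have dW: "\<And>s. s \<in> I \<Longrightarrow> (W has_vector_derivative cross3 (xi s) (x2 s)) (at s)"
  proof -
    fix s assume s: "s \<in> I"
    have "W = (\<lambda>s. cross3 (xi s) (x1 s))" by (simp add: W_def fun_eq_iff)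
    then show "(W has_vector_derivative cross3 (xi s) (x2 s)) (at s)"
      using has_vector_derivative_cross[OF dx[OF s] dx1[OF s]] by simp
  qed
  have dk2: "\<And>s. s \<in> I \<Longrightarrow> (k2 has_real_derivative 2 * (x1 s \<bullet> x2 s)) (at s)"
  proof -
    fix s assume s: "s \<in> I"
    have "k2 = (\<lambda>s. x1 s \<bullet> x1 s)" by (simp add: k2_def fun_eq_iff)
    then show "(k2 has_real_derivative 2 * (x1 s \<bullet> x2 s)) (at s)"
      using has_real_derivative_inner[OF dx1[OF s] dx1[OF s]] by (simp add: inner_commute)
  qed
  define Wd where "Wd s = (1 / sqrt (k2 s)) *\<^sub>R cross3 (xi s) (x2 s) + (- (2 * (x1 s \<bullet> x2 s)) / (2 * k2 s * sqrt (k2 s))) *\<^sub>R W s" for s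
  have dWb: "\<And>s. s \<in> I \<Longrightarrow> (Wb has_vector_derivative Wd s) (at s)"
  proof -
    fix s assume s: "s \<in> I"
    have e: "Wb = (\<lambda>s. (1 / sqrt (k2 s)) *\<^sub>R W s)" by (simp add: Wb_def fun_eq_iff)
    show "(Wb has_vector_derivative Wd s) (at s)"
      unfolding e Wd_def
      by (rule has_vector_derivative_scaleR[OF inv_sqrt_deriv[OF dk2[OF s] k2_pos[OF s]] dW[OF s]])
  qed
  define \<sigma> where "\<sigma> s = W s \<bullet> x2 s" for s
  have W'xi: "\<And>s. cross3 (xi s) (x2 s) \<bullet> xi s = 0" by (simp add: dot_cross_self)
  have W'x1: "\<And>s. cross3 (xi s) (x2 s) \<bullet> x1 s = - \<sigma> s" unfolding \<sigma>_def W_def by (rule triple_swap)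
  have W'W: "\<And>s. s \<in> I \<Longrightarrow> cross3 (xi s) (x2 s) \<bullet> W s = x1 s \<bullet> x2 s"
    using a1 a2 by (simp add: W_def lagrange3 inner_commute)
  have Wxi: "\<And>s. W s \<bullet> xi s = 0" by (simp add: W_def dot_cross_self)
  have cW: "continuous_on I W" unfolding W_def[abs_def] using cxi cx1 by (intro continuous_on_cross)
  have ck2: "continuous_on I k2" unfolding k2_def[abs_def] using cx1 by (intro continuous_intros)
  have c\<sigma>: "continuous_on I \<sigma>" unfolding \<sigma>_def[abs_def] using cW cx2 by (intro continuous_intros)
  have cWb: "continuous_on I Wb" unfolding Wb_def[abs_def] using cW ck2
    by (intro continuous_intros) (use k2_pos in force)+
  have convI: "convex I" using I(1) by (simp add: is_interval_convex)
  have connI: "connected I" using I(1) by (simp add: is_interval_connected)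
  obtain s0 where s0: "s0 \<in> I" using I(3) by auto
  show ?thesis
  proof
    assume "Wn_helix I G K mu v"
    then obtain l e where l1: "norm l = 1" and le: "\<And>s. s \<in> I \<Longrightarrow> Wb s \<bullet> l = e"
      unfolding Wn_helix_def const_angle_field_def using Wb_eq by metis
    define p where "p s = x1 s \<bullet> l" for s
    define f where "f s = xi s \<bullet> l" for s
    have ll: "l \<bullet> l = 1" using l1 by (simp add: dot_square_norm)
    have Wl: "\<And>s. s \<in> I \<Longrightarrow> W s \<bullet> l = e * sqrt (k2 s)"
    proof -
      fix s assume s: "s \<in> I"
      have "Wb s \<bullet> l = (W s \<bullet> l) / sqrt (k2 s)" by (simp add: Wb_def)
      then show "W s \<bullet> l = e * sqrt (k2 s)" using le[OF s] k2_pos[OF s] by (simp add: field_simps)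
    qed
    have Wdl: "\<And>s. s \<in> I \<Longrightarrow> Wd s \<bullet> l = 0"
    proof -
      fix s assume s: "s \<in> I"
      have "((\<lambda>s. Wb s \<bullet> l - e) has_real_derivative (Wb s \<bullet> 0 + Wd s \<bullet> l - 0)) (at s)"
        by (intro derivative_intros has_real_derivative_inner dWb[OF s] has_vector_derivative_const)
      then show "Wd s \<bullet> l = 0"
        using local_const_deriv[OF I(2) s, of "\<lambda>s. Wb s \<bullet> l - e"] le by simp
    qed
    have sp: "\<And>s. s \<in> I \<Longrightarrow> \<sigma> s * p s = 0"
    proof -
      fix s assume s: "s \<in> I"
      have i: "k2 s * (cross3 (xi s) (x2 s) \<bullet> l) = - \<sigma> s * p s + (x1 s \<bullet> x2 s) * (W s \<bullet> l)"
        using decomp_dot[OF a1[OF s] a2[OF s], of "cross3 (xi s) (x2 s)" l] W'xi W'x1 W'W[OF s]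
        by (simp add: k2_def p_def W_def)
      have "Wd s \<bullet> l * (k2 s * sqrt (k2 s)) = k2 s * (cross3 (xi s) (x2 s) \<bullet> l) - (x1 s \<bullet> x2 s) * (W s \<bullet> l)"
      proof -
        have wd: "Wd s \<bullet> l = (cross3 (xi s) (x2 s) \<bullet> l) / sqrt (k2 s) - (x1 s \<bullet> x2 s) * (W s \<bullet> l) / (k2 s * sqrt (k2 s))"
          by (simp add: Wd_def inner_add_left inner_diff_left)
        have "sqrt (k2 s) > 0" using k2_pos[OF s] by simp
        then show ?thesis using k2_pos[OF s] unfolding wd by (simp add: field_simps)
      qed
      then show "\<sigma> s * p s = 0" using Wdl[OF s] i by simp
    qed
    have iv: "\<And>s. s \<in> I \<Longrightarrow> k2 s * (1 - (f s)\<^sup>2 - e\<^sup>2) = (p s)\<^sup>2"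
    proof -
      fix s assume s: "s \<in> I"
      have "k2 s * (l \<bullet> l) = k2 s * (l \<bullet> xi s) * (xi s \<bullet> l) + (l \<bullet> x1 s) * (x1 s \<bullet> l) + (l \<bullet> W s) * (W s \<bullet> l)"
        using decomp_dot[OF a1[OF s] a2[OF s], of l l] by (simp add: k2_def W_def)
      then show "k2 s * (1 - (f s)\<^sup>2 - e\<^sup>2) = (p s)\<^sup>2"
        using Wl[OF s] k2_pos[OF s] ll
        by (simp add: f_def p_def inner_commute power2_eq_square algebra_simps)
    qed
    have p_zero_helix: "xi_helix I xi" if pz: "\<And>s. s \<in> I \<Longrightarrow> p s = 0"
    proof -
      have "\<And>s. s \<in> I \<Longrightarrow> (f has_field_derivative 0) (at s within I)"
      proof -
        fix s assume s: "s \<in> I"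
        have e: "f = (\<lambda>s. xi s \<bullet> l)" by (simp add: f_def fun_eq_iff)
        have "(f has_real_derivative (xi s \<bullet> 0 + x1 s \<bullet> l)) (at s)"
          unfolding e by (intro has_real_derivative_inner dx[OF s] has_vector_derivative_const)
        then show "(f has_field_derivative 0) (at s within I)"
          using pz[OF s] by (simp add: p_def has_field_derivative_at_within)
      qed
      then obtain c where "\<forall>s\<in>I. f s = c" using has_field_derivative_zero_constant[OF convI] by blast
      then show ?thesis unfolding xi_helix_def const_angle_field_def using l1 f_def by metis
    qed
    show "xi_helix I xi"
    proof (cases "\<forall>s\<in>I. \<sigma> s = 0")
      case True
      have Wd0: "Wd s = 0" if s: "s \<in> I" for s
      proof -
        have dec: "k2 s *\<^sub>R x2 s = (k2 s * (x2 s \<bullet> xi s)) *\<^sub>R xi s + (x2 s \<bullet> x1 s) *\<^sub>R x1 s + (x2 s \<bullet> W s) *\<^sub>R W s"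
          using decomp[OF a1[OF s] a2[OF s], of "x2 s"] by (simp add: k2_def W_def)
        have x2W: "x2 s \<bullet> W s = 0" using True s by (simp add: \<sigma>_def inner_commute)
        have "cross3 (xi s) (k2 s *\<^sub>R x2 s) = cross3 (xi s) ((k2 s * (x2 s \<bullet> xi s)) *\<^sub>R xi s + (x2 s \<bullet> x1 s) *\<^sub>R x1 s + (x2 s \<bullet> W s) *\<^sub>R W s)"
          using dec by simp
        then have "k2 s *\<^sub>R cross3 (xi s) (x2 s) = (x1 s \<bullet> x2 s) *\<^sub>R W s"
          using x2W by (simp add: cross_add_right cross_mult_right W_def inner_commute)
        then have W': "cross3 (xi s) (x2 s) = ((x1 s \<bullet> x2 s) / k2 s) *\<^sub>R W s"
          using k2_pos[OF s] by (metis (no_types, lifting) divide_inverse_commute less_irrefl mult.commute scaleR_scaleR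
              inverse_eq_divide scaleR_one right_inverse)
        have "Wd s = ((1 / sqrt (k2 s)) * ((x1 s \<bullet> x2 s) / k2 s) + (- (2 * (x1 s \<bullet> x2 s)) / (2 * k2 s * sqrt (k2 s)))) *\<^sub>R W s"
          by (simp add: Wd_def W' scaleR_add_left)
        also have "\<dots> = 0" by simp
        finally show ?thesis .
      qed
      obtain c0 where c0: "\<And>s. s \<in> I \<Longrightarrow> Wb s = c0"
        using has_vector_derivative_zero_constant[OF convI, of Wb] dWb Wd0
        by (metis has_vector_derivative_at_within)
      have "norm (Wb s0) = 1"
        using normW[OF s0] k2_pos[OF s0] by (simp add: Wb_def)
      then have n1: "norm c0 = 1" using c0[OF s0] by simp
      have "\<forall>s\<in>I. xi s \<bullet> c0 = 0"
      proof
        fix s assume s: "s \<in> I"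
        have xw: "xi s \<bullet> W s = 0" using Wxi[of s] by (simp add: inner_commute)
        have "xi s \<bullet> c0 = xi s \<bullet> Wb s" using c0[OF s] by simp
        then show "xi s \<bullet> c0 = 0" using xw by (simp add: Wb_def)
      qed
      then show ?thesis unfolding xi_helix_def const_angle_field_def using n1 by blast
    next
      case False
      then obtain s1 where s1: "s1 \<in> I" "\<sigma> s1 \<noteq> 0" by blast
      show ?thesis
      proof (cases "e\<^sup>2 = 1")
        case True
        show ?thesis
        proof (rule p_zero_helix)
          fix s assume s: "s \<in> I"
          have h: "(p s)\<^sup>2 + k2 s * (f s)\<^sup>2 = 0" using iv[OF s] True by (simp add: algebra_simps)
          have "k2 s * (f s)\<^sup>2 \<ge> 0" using k2_pos[OF s] by simp
          then have "(p s)\<^sup>2 = 0" using h by (smt (verit) zero_le_power2)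
          then show "p s = 0" by simp
        qed
      next
        case False
        have "(p s0)\<^sup>2 \<ge> 0" by simp
        then have "k2 s0 * (1 - (f s0)\<^sup>2 - e\<^sup>2) \<ge> 0" using iv[OF s0] by simp
        then have "1 - (f s0)\<^sup>2 - e\<^sup>2 \<ge> 0" using k2_pos[OF s0] by (simp add: zero_le_mult_iff)
        then have e1: "e\<^sup>2 < 1" using False by (smt (verit) zero_le_power2)
        define S where "S = {s \<in> I. \<sigma> s \<noteq> 0}"
        have "open (I \<inter> \<sigma> -` (- {0}))"
          by (rule continuous_open_preimage[OF c\<sigma> I(2)]) auto
        moreover have "I \<inter> \<sigma> -` (- {0}) = S" by (auto simp: S_def)
        ultimately have openS: "open S" by simp
        have SI: "S \<subseteq> I" by (auto simp: S_def)
        have pS: "\<And>s. s \<in> S \<Longrightarrow> p s = 0" using sp by (auto simp: S_def)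
        have eqS: "e * \<sigma> s * sqrt (k2 s) = (k2 s)\<^sup>2 * f s" if s: "s \<in> S" for s
        proof -
          have sI: "s \<in> I" using s SI by auto
          have e: "p = (\<lambda>s. x1 s \<bullet> l)" by (simp add: p_def fun_eq_iff)
          have "(p has_real_derivative (x1 s \<bullet> 0 + x2 s \<bullet> l)) (at s)"
            unfolding e by (intro has_real_derivative_inner dx1[OF sI] has_vector_derivative_const)
          then have x2l: "x2 s \<bullet> l = 0" using local_const_deriv[OF openS s, of p] pS by simp
          have "k2 s * (x2 s \<bullet> l) = k2 s * (x2 s \<bullet> xi s) * (xi s \<bullet> l) + (x2 s \<bullet> x1 s) * (x1 s \<bullet> l) + (x2 s \<bullet> W s) * (W s \<bullet> l)"
            using decomp_dot[OF a1[OF sI] a2[OF sI], of "x2 s" l] by (simp add: k2_def W_def)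
          moreover have "x2 s \<bullet> xi s = - k2 s" using a5[OF sI] by (simp add: inner_commute)
          moreover have "x1 s \<bullet> l = 0" using pS[OF s] by (simp add: p_def)
          moreover have "x2 s \<bullet> W s = \<sigma> s" by (simp add: \<sigma>_def inner_commute)
          ultimately have "0 = - k2 s * k2 s * f s + \<sigma> s * (e * sqrt (k2 s))"
            using x2l Wl[OF sI] by (simp add: f_def)
          then show ?thesis by (simp add: power2_eq_square algebra_simps)
        qed
        define q where "q s = (p s)\<^sup>2 + (e * \<sigma> s * sqrt (k2 s) - (k2 s)\<^sup>2 * f s)\<^sup>2" for s
        have Seq: "S = {s \<in> I. q s = 0}"
        proof (intro set_eqI iffI)
          fix s assume s: "s \<in> S"
          then show "s \<in> {s \<in> I. q s = 0}" using pS[OF s] eqS[OF s] SI by (auto simp: q_def)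
        next
          fix s assume s: "s \<in> {s \<in> I. q s = 0}"
          then have sI: "s \<in> I" and qs: "q s = 0" by auto
          have ps: "p s = 0" and eq: "e * \<sigma> s * sqrt (k2 s) = (k2 s)\<^sup>2 * f s"
            using qs by (auto simp: q_def add_nonneg_eq_0_iff)
          have "k2 s * (1 - (f s)\<^sup>2 - e\<^sup>2) = 0" using iv[OF sI] ps by simp
          then have "(f s)\<^sup>2 = 1 - e\<^sup>2" using k2_pos[OF sI] by simp
          then have "f s \<noteq> 0" using e1 by auto
          then have "(k2 s)\<^sup>2 * f s \<noteq> 0" using k2_pos[OF sI] by simp
          then have "\<sigma> s \<noteq> 0" using eq by auto
          then show "s \<in> S" using sI by (simp add: S_def)
        qed
        have cp: "continuous_on I p" unfolding p_def[abs_def] using cx1 by (intro continuous_intros)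
        have cf: "continuous_on I f" unfolding f_def[abs_def] using cxi by (intro continuous_intros)
        have csk: "continuous_on I (\<lambda>s. sqrt (k2 s))" using ck2 by (intro continuous_intros)
        have cq: "continuous_on I q" unfolding q_def[abs_def] using cp cf csk ck2 c\<sigma> by (intro continuous_intros)
        have clS: "closedin (top_of_set I) S"
          unfolding Seq by (rule continuous_closedin_preimage_constant[OF cq])
        have opS: "openin (top_of_set I) S" by (rule open_subset[OF SI openS])
        have "S = {} \<or> S = I" using connI clS opS connected_clopen by blast
        moreover have "S \<noteq> {}" using s1 by (auto simp: S_def)
        ultimately have "S = I" by simp
        then show ?thesis using p_zero_helix pS by blast
      qed
    qed
  next
    assume "xi_helix I xi"
    then obtain d c where d1: "norm d = 1" and dc: "\<And>s. s \<in> I \<Longrightarrow> xi s \<bullet> d = c"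
      unfolding xi_helix_def const_angle_field_def by blast
    have dd: "d \<bullet> d = 1" using d1 by (simp add: dot_square_norm)
    have x1d: "x1 s \<bullet> d = 0" if s: "s \<in> I" for s
    proof -
      have "((\<lambda>s. xi s \<bullet> d - c) has_real_derivative (xi s \<bullet> 0 + x1 s \<bullet> d - 0)) (at s)"
        by (intro DERIV_diff has_real_derivative_inner dx[OF s] has_vector_derivative_const DERIV_const)
      then show ?thesis using local_const_deriv[OF I(2) s, of "\<lambda>s. xi s \<bullet> d - c"] dc by simp
    qed
    have sq: "(Wb s \<bullet> d)\<^sup>2 = 1 - c\<^sup>2" if s: "s \<in> I" for s
    proof -
      have "k2 s * (d \<bullet> d) = k2 s * (d \<bullet> xi s) * (xi s \<bullet> d) + (d \<bullet> x1 s) * (x1 s \<bullet> d) + (d \<bullet> W s) * (W s \<bullet> d)"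
        using decomp_dot[OF a1[OF s] a2[OF s], of d d] by (simp add: k2_def W_def)
      then have h: "(W s \<bullet> d)\<^sup>2 = k2 s * (1 - c\<^sup>2)"
        using dd dc[OF s] x1d[OF s] by (simp add: inner_commute power2_eq_square algebra_simps)
      have "(Wb s \<bullet> d)\<^sup>2 = (W s \<bullet> d)\<^sup>2 / k2 s"
        using k2_pos[OF s] by (simp add: Wb_def power_divide)
      then show ?thesis using h k2_pos[OF s] by simp
    qed
    have "continuous_on I (\<lambda>s. Wb s \<bullet> d)" using cWb by (intro continuous_intros)
    then obtain c' where "\<forall>s\<in>I. Wb s \<bullet> d = c'" using sq_const_imp_const[OF connI] sq by blast
    then have "\<forall>s\<in>I. unit_ND_vector G K mu v s \<bullet> d = c'" using Wb_eq by simp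
    then show "Wn_helix I G K mu v" unfolding Wn_helix_def const_angle_field_def using d1 by blast
  qed
qed
end
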